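(* Let $0<\mu<L_{\max}^{-1}$ with $L_{\max}=\max_i\|A_i\|_2^2$, and let $\{x^n\}$ be generated by GAITA (as in the context) from an arbitrary $x^0\in\mathbf{R}^N$. Then $\{x^n\}$ has a convergent subsequence. Moreover, the set $\mathcal{L}$ of limit points of $\{x^n\}$ is closed and connected.
   Context: Let $A\in\mathbf{R}^{m\times N}$ have columns $A_1,\dots,A_N$, $y\in\mathbf{R}^m$, $\lambda>0$, $q\in(0,1)$, and $T_\lambda(x)=\frac12\|Ax-y\|_2^2+\lambda\sum_{i=1}^N|x_i|^q$. For a step size $\mu>0$ set $\tau_{\mu,q}=\frac{2-q}{2-2q}(2\lambda\mu(1-q))^{\frac{1}{2-q}}$ and $\eta_{\mu,q}=(2\lambda\mu(1-q))^{\frac{1}{2-q}}$. For $z\in\mathbf{R}$ let $prox_{\mu,\lambda|\cdot|^q}(z)=\arg\min_{v\in\mathbf{R}}\{\frac{(z-v)^2}{2\mu}+\lambda|v|^q\}$ (a single point when $|z|\neq\tau_{\mu,q}$). Define $\mathcal{T}(z,w)$ as the unique element of $prox_{\mu,\lambda|\cdot|^q}(z)$ if $|z|\neq\tau_{\mu,q}$, and, if $|z|=\tau_{\mu,q}$, as $sgn(z)\eta_{\mu,q}$ when $w\neq0$ and $0$ when $w=0$ ($sgn(0)=0$). GAITA: given $x^0\in\mathbf{R}^N$, for $n=0,1,2,\dots$ let $i=(n\bmod N)+1$, $z_i^n=x_i^n-\mu A_i^T(Ax^n-y)$, $x_i^{n+1}=\mathcal{T}(z_i^n,x_i^n)$,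 $x_j^{n+1}=x_j^n$ for $j\neq i$. *)

theory Defs
  imports "HOL-Analysis.Analysis"
begin

definition tau_mq :: "real \<Rightarrow> real \<Rightarrow> real \<Rightarrow> real" where
  "tau_mq lam mu q = (2 - q) / (2 - 2 * q) * (2 * lam * mu * (1 - q)) powr (1 / (2 - q))"

definition eta_mq :: "real \<Rightarrow> real \<Rightarrow> real \<Rightarrow> real" where
  "eta_mq lam mu q = (2 * lam * mu * (1 - q)) powr (1 / (2 - q))"

definition prox_q :: "real \<Rightarrow> real \<Rightarrow> real \<Rightarrow> real \<Rightarrow> real set" where
  "prox_q lam mu q z =
     {v. \<forall>u. (z - v)^2 / (2 * mu) + lam * \<bar>v\<bar> powr q \<le> (z - u)^2 / (2 * mu) + lam * \<bar>u\<bar> powr q}"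

definition Tmap :: "real \<Rightarrow> real \<Rightarrow> real \<Rightarrow> real \<Rightarrow> real \<Rightarrow> real" where
  "Tmap lam mu q z w =
     (if \<bar>z\<bar> \<noteq> tau_mq lam mu q then (THE v. v \<in> prox_q lam mu q z)
      else if w \<noteq> 0 then sgn z * eta_mq lam mu q else 0)"

text \<open>One GAITA step at iteration n. The columns are labelled via a bijection
  idx from {0..<N} to the index type, so coordinate (n mod N)+1 of the paper is idx (n mod N).\<close>
definition gaita_step ::
  "real \<Rightarrow> real \<Rightarrow> real \<Rightarrow> real^'n^'m \<Rightarrow> real^'m \<Rightarrow> (nat \<Rightarrow> 'n) \<Rightarrow> nat \<Rightarrow> real^'n \<Rightarrow> real^'n" where
  "gaita_step lam mu q A y idx n x =
     (\<chi> j. if j = idx (n mod CARD('n))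
           then Tmap lam mu q (x $ j - mu * (column j A \<bullet> (A *v x - y))) (x $ j)
           else x $ j)"

definition limit_points :: "(nat \<Rightarrow> 'a::topological_space) \<Rightarrow> 'a set" where
  "limit_points x = {l. \<exists>r. strict_mono r \<and> (x \<circ> r) \<longlonglongrightarrow> l}"

end

theory Submission imports Defs begin


context
  fixes lam mu q :: real
  assumes lam: "lam > 0" and mu: "mu > 0" and q0: "0 < q" and q1: "q < 1"
begin

lemma bern: assumes "s > 0" shows "(1-q)* s + s powr (q-1) \<ge> 2 - q"
proof -
  have "s powr (q-1) = exp ((q-1) * ln s)" using assms by (simp add: powr_def)
  also have "\<dots> \<ge> 1 + (q-1) * ln s" by (rule exp_ge_add_one_self)
  finally have a: "s powr (q-1) \<ge> 1 + (q-1) * ln s" .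
  have "ln s \<le> s - 1" using assms by (rule ln_le_minus_one)
  hence "(q-1) * ln s \<ge> (q-1) * (s-1)" using q1 by (intro mult_left_mono_neg) auto
  with a show ?thesis by (simp add: algebra_simps)
qed

lemma eta_pos: "eta_mq lam mu q > 0"
  unfolding eta_mq_def using lam mu q1 by simp

lemma eta_pow: "eta_mq lam mu q powr (2-q) = 2*lam*mu*(1-q)"
  unfolding eta_mq_def using lam mu q1 by (simp add: powr_powr)

lemma tau_eq: "tau_mq lam mu q = (2-q)/(2-2*q) * eta_mq lam mu q"
  unfolding tau_mq_def eta_mq_def by simp

lemma lm_eta: "lam*mu * eta_mq lam mu q powr (q-1) = eta_mq lam mu q / (2*(1-q))"
proof -
  let ?e = "eta_mq lam mu q"
  have "?e powr (2-q) * ?e powr (q-1) = ?e" using eta_pos by (simp add: powr_add[symmetric])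
  hence "2*lam*mu*(1-q) * ?e powr (q-1) = ?e" using eta_pow by simp
  thus ?thesis using q1 by (simp add: field_simps)
qed

lemma kbound: assumes "v > 0" shows "tau_mq lam mu q \<le> v/2 + lam*mu * v powr (q-1)"
proof -
  let ?e = "eta_mq lam mu q"
  define s where "s = v / ?e"
  have s: "s > 0" and v: "v = ?e * s" using assms eta_pos by (auto simp: s_def)
  have "v powr (q-1) = ?e powr (q-1) * s powr (q-1)" using v eta_pos s by (simp add: powr_mult)
  hence "lam*mu * v powr (q-1) = (lam*mu * ?e powr (q-1)) * s powr (q-1)" by simp
  also have "\<dots> = ?e / (2*(1-q)) * s powr (q-1)" using lm_eta by simp
  finally have P: "lam*mu * v powr (q-1) = ?e / (2*(1-q)) * s powr (q-1)" .
  have gen: "\<And>P S. P = ?e / (2*(1-q)) * S \<Longrightarrow> ?e * s/2 + P = ?e/2 * (s + S / (1-q))"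
    by (simp add: distrib_left)
  have k: "v/2 + lam*mu * v powr (q-1) = ?e/2 * (s + s powr (q-1) / (1-q))"
    using gen[OF P] v by simp
  have "(2-q)/(1-q) \<le> ((1-q)* s + s powr (q-1))/(1-q)" using bern[OF s] q1 by (intro divide_right_mono) auto
  also have "\<dots> = s + s powr (q-1) / (1-q)" using q1 by (simp add: add_divide_distrib)
  finally have "(2-q)/(1-q) \<le> s + s powr (q-1) / (1-q)" .
  hence "?e/2 * ((2-q)/(1-q)) \<le> ?e/2 * (s + s powr (q-1) / (1-q))"
    using eta_pos by (intro mult_left_mono) auto
  thus ?thesis unfolding k tau_eq using q1 by (simp add: field_simps)
qed

lemma keta: "tau_mq lam mu q = eta_mq lam mu q/2 + lam*mu * eta_mq lam mu q powr (q-1)"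
  unfolding tau_eq lm_eta using q1 by (simp add: field_simps)

definition "Hq z v = (z - v)^2 / (2 * mu) + lam * \<bar>v\<bar> powr q"

lemma prox_iff: "v \<in> prox_q lam mu q z \<longleftrightarrow> (\<forall>u. Hq z v \<le> Hq z u)"
  unfolding prox_q_def Hq_def by simp

lemma Hq_sym: "Hq (-z) (-v) = Hq z v"
  unfolding Hq_def by (simp add: power2_eq_square algebra_simps)

lemma prox_sym: "v \<in> prox_q lam mu q z \<longleftrightarrow> -v \<in> prox_q lam mu q (-z)"
  unfolding prox_iff by (metis Hq_sym minus_minus)

lemma diff0: assumes "v > 0"
  shows "Hq z v - Hq z 0 = v/mu * (v/2 + lam*mu * v powr (q-1) - z)"
proof -
  have "v powr 1 * v powr (q-1) = v powr (1 + (q-1))" by (rule powr_add[symmetric])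
  hence "v powr q = v * v powr (q-1)" using assms by simp
  thus ?thesis unfolding Hq_def using assms mu q0 by (simp add: power2_eq_square field_simps)
qed

lemma absdom: assumes "z \<ge> 0" shows "Hq z \<bar>v\<bar> \<le> Hq z v"
proof -
  have "(z - \<bar>v\<bar>)^2 \<le> (z - v)^2" using assms
    by (cases "v \<ge> 0") (auto simp: power2_eq_square algebra_simps mult_le_0_iff)
  thus ?thesis unfolding Hq_def using mu by (simp add: divide_right_mono)
qed

lemma absdom_strict: assumes "z > 0" "v < 0" shows "Hq z \<bar>v\<bar> < Hq z v"
proof -
  have h: "(z - \<bar>v\<bar>)^2 < (z - v)^2" using assms
    by (auto simp: power2_eq_square algebra_simps mult_less_0_iff)
  have "(z - \<bar>v\<bar>)^2 / (2*mu) < (z - v)^2 / (2*mu)" by (rule divide_strict_right_mono[OF h]) (use mu in simp)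
  thus ?thesis unfolding Hq_def using assms by simp
qed

lemma tau_pos: "tau_mq lam mu q > 0"
  unfolding tau_eq using eta_pos q1 by simp

lemma prox_small: assumes "0 \<le> z" "z < tau_mq lam mu q"
  shows "v \<in> prox_q lam mu q z \<longleftrightarrow> v = 0"
proof -
  have pos: "Hq z 0 < Hq z v" if "v > 0" for v
  proof -
    have "0 < v/mu * (v/2 + lam*mu * v powr (q-1) - z)"
      using kbound[OF that] assms that mu by (intro mult_pos_pos) auto
    thus ?thesis using diff0[OF that, of z] by linarith
  qed
  have all: "Hq z 0 < Hq z v" if "v \<noteq> 0" for v
  proof (cases "v > 0")
    case True thus ?thesis using pos by blast
  next
    case False
    hence "Hq z \<bar>v\<bar> \<le> Hq z v" using absdom assms by blast
    moreover have "Hq z 0 < Hq z \<bar>v\<bar>" using pos that by simp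
    ultimately show ?thesis by simp
  qed
  show ?thesis unfolding prox_iff using all by (metis less_le_not_le order_refl)
qed

lemma prox_tie: "0 \<in> prox_q lam mu q (tau_mq lam mu q)" "eta_mq lam mu q \<in> prox_q lam mu q (tau_mq lam mu q)"
proof -
  let ?z = "tau_mq lam mu q"
  have pos: "Hq ?z 0 \<le> Hq ?z v" if "v > 0" for v
  proof -
    have "0 \<le> v/mu * (v/2 + lam*mu * v powr (q-1) - ?z)"
      using kbound[OF that] that mu by (intro mult_nonneg_nonneg) auto
    thus ?thesis using diff0[OF that, of ?z] by linarith
  qed
  have all: "Hq ?z 0 \<le> Hq ?z v" for v
  proof (cases "v > 0")
    case True thus ?thesis using pos by blast
  next
    case False
    hence "Hq ?z \<bar>v\<bar> \<le> Hq ?z v" using absdom tau_pos by (meson less_imp_le)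
    moreover have "Hq ?z 0 \<le> Hq ?z \<bar>v\<bar>" using pos False by (cases "v = 0") auto
    ultimately show ?thesis by simp
  qed
  have "Hq ?z (eta_mq lam mu q) - Hq ?z 0 = 0" unfolding diff0[OF eta_pos] keta[symmetric] by simp
  hence "Hq ?z (eta_mq lam mu q) = Hq ?z 0" by simp
  thus "0 \<in> prox_q lam mu q ?z" "eta_mq lam mu q \<in> prox_q lam mu q ?z"
    unfolding prox_iff using all by auto
qed

lemma prox_big_ex: assumes "z > tau_mq lam mu q" shows "\<exists>v. v \<in> prox_q lam mu q z"
proof -
  have z: "z > 0" using assms tau_pos by linarith
  let ?f = "\<lambda>v. (z - v)^2 / (2*mu) + lam * v powr q"
  have "continuous_on {0..2*z} ?f"
    by (intro continuous_intros continuous_on_powr') (use q0 mu in auto)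
  then obtain v0 where v0: "v0 \<in> {0..2*z}" "\<forall>y\<in>{0..2*z}. ?f v0 \<le> ?f y"
    using continuous_attains_inf[of "{0..2*z}" ?f] z by auto
  have fH: "?f y = Hq z y" if "y \<ge> 0" for y using that unfolding Hq_def by simp
  have "Hq z v0 \<le> Hq z u" for u
  proof (cases "\<bar>u\<bar> \<le> 2*z")
    case True
    hence "Hq z v0 \<le> Hq z \<bar>u\<bar>" using v0 fH by auto
    also have "\<dots> \<le> Hq z u" using absdom z by simp
    finally show ?thesis .
  next
    case False
    have "Hq z v0 \<le> Hq z 0" using v0 fH z by auto
    also have "Hq z 0 = z^2/(2*mu)" unfolding Hq_def using q0 by simp
    also have "z^2 \<le> (z-u)^2"
    proof -
      have "(z-u)^2 - z^2 = u * (u - 2*z)" by (simp add: power2_eq_square algebra_simps)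
      also have "\<dots> \<ge> 0" using False z by (cases "u \<ge> 0") (auto simp: zero_le_mult_iff)
      finally show ?thesis by simp
    qed
    hence "z^2/(2*mu) \<le> (z-u)^2/(2*mu)" using mu by (simp add: divide_right_mono)
    also have "\<dots> \<le> Hq z u" unfolding Hq_def using lam by simp
    finally show ?thesis .
  qed
  thus ?thesis unfolding prox_iff by blast
qed

lemma prox_big_props: assumes "z > tau_mq lam mu q" "v \<in> prox_q lam mu q z"
  shows "v > 0" "v + lam*mu*q * v powr (q-1) = z" "lam*mu*(1-q) * v powr (q-2) \<le> 1/2"
proof -
  have z: "z > 0" using assms tau_pos by linarith
  have min: "Hq z v \<le> Hq z u" for u using assms(2) prox_iff by blast
  have "Hq z (eta_mq lam mu q) - Hq z 0 < 0"
    unfolding diff0[OF eta_pos] keta[symmetric] using assms eta_pos mu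
    by (simp add: mult_pos_neg divide_neg_pos)
  hence "v \<noteq> 0" using min[of "eta_mq lam mu q"] by auto
  moreover have "\<not> v < 0" using absdom_strict[OF z, of v] min[of "\<bar>v\<bar>"] by auto
  ultimately show vpos: "v > 0" by simp
  let ?p = "\<lambda>t. (z - t)^2 / (2*mu) + lam * t powr q"
  have der: "(?p has_real_derivative (-(z - v)/mu + lam*(q * v powr (q-1)))) (at v)"
    using vpos mu by (auto intro!: derivative_eq_intros simp: field_simps power2_eq_square)
  have "\<forall>y. \<bar>v - y\<bar> < v \<longrightarrow> ?p v \<le> ?p y"
  proof (intro allI impI)
    fix y assume "\<bar>v - y\<bar> < v"
    hence "y > 0" by linarith
    thus "?p v \<le> ?p y" using min[of y] vpos unfolding Hq_def by simp
  qed
  from DERIV_local_min[OF der vpos this]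
  have "-(z - v)/mu + lam*(q * v powr (q-1)) = 0" .
  hence eq: "v + lam*mu*q * v powr (q-1) = z" using mu by (simp add: field_simps)
  thus "v + lam*mu*q * v powr (q-1) = z" .
  have "Hq z v - Hq z 0 \<le> 0" using min[of 0] by simp
  hence "v/mu * (v/2 + lam*mu * v powr (q-1) - z) \<le> 0" unfolding diff0[OF vpos] .
  moreover have "v/mu > 0" using vpos mu by simp
  ultimately have "v/2 + lam*mu * v powr (q-1) - z \<le> 0" by (metis mult_pos_pos not_le)
  hence A: "lam*mu*(1-q) * v powr (q-1) \<le> v/2" using eq by (simp add: algebra_simps)
  have "v powr 1 * v powr (q-2) = v powr (1 + (q-2))" by (rule powr_add[symmetric])
  hence "v powr (q-1) = v * v powr (q-2)" using vpos by simp
  hence "v * (lam*mu*(1-q) * v powr (q-2)) \<le> v * (1/2)" using A by (simp add: algebra_simps)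
  thus "lam*mu*(1-q) * v powr (q-2) \<le> 1/2" using vpos by simp
qed

lemma prox_big_uniq: assumes "z > tau_mq lam mu q" "v1 \<in> prox_q lam mu q z" "v2 \<in> prox_q lam mu q z"
  shows "v1 = v2"
proof (rule ccontr)
  assume "v1 \<noteq> v2"
  have main: "False" if a: "a \<in> prox_q lam mu q z" "b \<in> prox_q lam mu q z" "a < b" for a b
  proof -
    note pa = prox_big_props[OF assms(1) a(1)] and pb = prox_big_props[OF assms(1) a(2)]
    let ?m = "\<lambda>t. t + lam*mu*q * t powr (q-1)"
    have "?m a < ?m b"
    proof (rule DERIV_pos_imp_increasing[OF a(3)])
      fix t assume t: "a \<le> t" "t \<le> b"
      hence tpos: "t > 0" using pa by linarith
      have "t powr (q-2) \<le> a powr (q-2)" using powr_mono2'[of "q-2" a t] t pa q1 by simp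
      hence "lam*mu*(1-q) * t powr (q-2) \<le> lam*mu*(1-q) * a powr (q-2)"
        using lam mu q1 by (intro mult_left_mono) auto
      hence B: "lam*mu*(1-q) * t powr (q-2) \<le> 1/2" using pa by linarith
      have "q * (lam*mu*(1-q) * t powr (q-2)) \<le> q * (1/2)" using B q0 by (intro mult_left_mono) auto
      hence pos: "1 + lam*mu*q*((q-1) * t powr (q-2)) > 0" using q1 by (simp add: algebra_simps)
      have "(?m has_real_derivative (1 + lam*mu*q*((q-1) * t powr (q-1-1)))) (at t)"
        using tpos by (auto intro!: derivative_eq_intros)
      thus "\<exists>y. (?m has_real_derivative y) (at t) \<and> 0 < y" using pos
        by (intro exI[of _ "1 + lam*mu*q*((q-1) * t powr (q-1-1))"]) (simp add: diff_diff_eq)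
    qed
    thus False using pa pb by simp
  qed
  show False using main assms \<open>v1 \<noteq> v2\<close> by (metis linorder_neqE_linordered_idom)
qed

lemma Tmap_in_prox: "Tmap lam mu q z w \<in> prox_q lam mu q z"
proof -
  have uniq_nonneg: "\<exists>!v. v \<in> prox_q lam mu q z" if "z \<ge> 0" "z \<noteq> tau_mq lam mu q" for z
  proof (cases "z < tau_mq lam mu q")
    case True thus ?thesis using prox_small[OF that(1)] by auto
  next
    case False
    hence "z > tau_mq lam mu q" using that by simp
    thus ?thesis using prox_big_ex prox_big_uniq by blast
  qed
  show ?thesis
  proof (cases "\<bar>z\<bar> = tau_mq lam mu q")
    case False
    have U: "\<exists>!v. v \<in> prox_q lam mu q z"
    proof (cases "z \<ge> 0")
      case True thus ?thesis using uniq_nonneg False by simp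
    next
      case neg: False
      have "\<exists>!v. v \<in> prox_q lam mu q (-z)" using uniq_nonneg neg False by simp
      then obtain v where v: "v \<in> prox_q lam mu q (-z)" "\<And>u. u \<in> prox_q lam mu q (-z) \<Longrightarrow> u = v" by blast
      show ?thesis
      proof (rule ex1I[of _ "-v"])
        show "-v \<in> prox_q lam mu q z" using v(1) prox_sym by (metis minus_minus)
        fix u assume "u \<in> prox_q lam mu q z"
        hence "-u \<in> prox_q lam mu q (-z)" using prox_sym by blast
        thus "u = -v" using v(2) by force
      qed
    qed
    show ?thesis unfolding Tmap_def using False theI'[OF U] by simp
  next
    case True
    show ?thesis
    proof (cases "z \<ge> 0")
      case nn: True
      hence z: "z = tau_mq lam mu q" "z > 0" using True tau_pos by auto
      thus ?thesis unfolding Tmap_def using True prox_tie by auto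
    next
      case False
      hence z: "z = - tau_mq lam mu q" "z < 0" using True by auto
      have "-eta_mq lam mu q \<in> prox_q lam mu q z" "0 \<in> prox_q lam mu q z"
        using prox_tie prox_sym z by (metis minus_minus neg_0_equal_iff_equal)+
      thus ?thesis unfolding Tmap_def using True z by auto
    qed
  qed
qed

end


lemma lp_cluster:
  assumes "l \<in> limit_points x" "e > 0"
  shows "\<exists>n\<ge>N. dist (x n) l < e"
proof -
  obtain r where r: "strict_mono r" "(x \<circ> r) \<longlonglongrightarrow> l" using assms(1) unfolding limit_points_def by auto
  have "eventually (\<lambda>n. dist ((x \<circ> r) n) l < e) sequentially"
    using r(2) assms(2) by (rule tendstoD)
  then obtain M where M: "\<And>n. n \<ge> M \<Longrightarrow> dist (x (r n)) l < e" by (auto simp: eventually_sequentially)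
  have "r (max M N) \<ge> N" using seq_suble[OF r(1), of "max M N"] by simp
  thus ?thesis using M[of "max M N"] by auto
qed

lemma cluster_lp:
  fixes x :: "nat \<Rightarrow> 'a::metric_space"
  assumes "\<And>e N. e > 0 \<Longrightarrow> \<exists>n\<ge>N. dist (x n) l < e"
  shows "l \<in> limit_points x"
proof -
  have "\<forall>N k. \<exists>n. n \<ge> N \<and> dist (x n) l < inverse (real (Suc k))"
    using assms by simp
  then obtain f where f: "\<And>N k. f N k \<ge> N \<and> dist (x (f N k)) l < inverse (real (Suc k))"
    by metis
  define r where "r = rec_nat (f 0 0) (\<lambda>k m. f (Suc m) (Suc k))"
  have r0: "r 0 = f 0 0" and rS: "\<And>k. r (Suc k) = f (Suc (r k)) (Suc k)" by (simp_all add: r_def)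
  have sm: "strict_mono r" unfolding strict_mono_Suc_iff
    using rS f by (metis Suc_le_eq)
  have d: "dist (x (r k)) l < inverse (real (Suc k))" for k
  proof (cases k)
    case 0 thus ?thesis using f[of 0 0] r0 by simp
  next
    case (Suc j) thus ?thesis using f[of "Suc (r j)" "Suc j"] rS[of j] by simp
  qed
  have "(\<lambda>k. dist ((x \<circ> r) k) l) \<longlonglongrightarrow> 0"
  proof (rule tendsto_sandwich[of "\<lambda>_. 0" _ _ "\<lambda>k. inverse (real (Suc k))"])
    show "\<forall>\<^sub>F n in sequentially. 0 \<le> dist ((x \<circ> r) n) l" by simp
    show "\<forall>\<^sub>F n in sequentially. dist ((x \<circ> r) n) l \<le> inverse (real (Suc n))"
      using d by (intro always_eventually allI) (auto intro: less_imp_le)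
  qed (use LIMSEQ_inverse_real_of_nat in simp_all)
  hence "(x \<circ> r) \<longlonglongrightarrow> l" using tendsto_dist_iff by blast
  thus ?thesis using sm unfolding limit_points_def by auto
qed

lemma lp_closed:
  fixes x :: "nat \<Rightarrow> 'a::metric_space"
  shows "closed (limit_points x)"
  unfolding closed_sequential_limits
proof (intro allI impI, elim conjE)
  fix s l assume s: "\<forall>n. s n \<in> limit_points x" "s \<longlonglongrightarrow> l"
  show "l \<in> limit_points x"
  proof (rule cluster_lp)
    fix e :: real and N assume e: "e > 0"
    obtain k where k: "dist (s k) l < e/2"
      using tendstoD[OF s(2), of "e/2"] e by (auto simp: eventually_sequentially)
    obtain n where n: "n \<ge> N" "dist (x n) (s k) < e/2" using lp_cluster[OF s(1)[rule_format, of k], of "e/2" N] e by auto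
    have "dist (x n) l < e" using dist_triangle[of "x n" l "s k"] k n by simp
    thus "\<exists>n\<ge>N. dist (x n) l < e" using n by auto
  qed
qed

lemma lp_bounded:
  fixes x :: "nat \<Rightarrow> 'a::metric_space"
  assumes "bounded (range x)"
  shows "bounded (limit_points x)"
proof -
  have "limit_points x \<subseteq> closure (range x)"
  proof
    fix l assume "l \<in> limit_points x"
    then obtain r where "(x \<circ> r) \<longlonglongrightarrow> l" unfolding limit_points_def by auto
    thus "l \<in> closure (range x)" unfolding closure_sequential by (intro exI[of _ "x \<circ> r"]) auto
  qed
  thus ?thesis using bounded_closure[OF assms] bounded_subset by blast
qed

lemma lp_stay:
  fixes x :: "nat \<Rightarrow> 'a::metric_space"
  assumes "\<And>n. n \<ge> N \<Longrightarrow> x n \<in> U \<union> V" "\<And>n. n \<ge> N \<Longrightarrow> x n \<in> U \<Longrightarrow> x (Suc n) \<notin> V"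
    "x N \<in> U"
  shows "\<And>n. n \<ge> N \<Longrightarrow> x n \<in> U"
proof -
  fix n assume "n \<ge> N"
  thus "x n \<in> U"
  proof (induction n rule: dec_induct)
    case base thus ?case using assms(3) .
  next
    case (step n) thus ?case using assms(1)[of "Suc n"] assms(2)[of n] by auto
  qed
qed

lemma lp_connected:
  fixes x :: "nat \<Rightarrow> 'a::heine_borel"
  assumes bd: "bounded (range x)" and dd: "\<And>e. e > 0 \<Longrightarrow> eventually (\<lambda>n. dist (x (Suc n)) (x n) < e) sequentially"
  shows "connected (limit_points x)"
proof -
  let ?L = "limit_points x"
  have cL: "compact ?L" using lp_closed lp_bounded[OF bd] compact_eq_bounded_closed by blast
  show ?thesis unfolding connected_closed
  proof (rule notI, elim exE conjE)
    fix A B assume A: "closed A" and B: "closed B" and sub: "?L \<subseteq> A \<union> B" and dis: "A \<inter> B \<inter> ?L = {}"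
      and ne1: "A \<inter> ?L \<noteq> {}" and ne2: "B \<inter> ?L \<noteq> {}"
    let ?A = "A \<inter> ?L" and ?B = "B \<inter> ?L"
    have cA: "compact ?A" using compact_Int_closed[OF cL A] by (simp add: Int_commute)
    have clB: "closed ?B" using B lp_closed by blast
    obtain d where d: "d > 0" "\<And>a b. a \<in> ?A \<Longrightarrow> b \<in> ?B \<Longrightarrow> d \<le> dist a b"
      using separate_compact_closed[OF cA clB] dis by auto blast
    define U where "U = {p. \<exists>a\<in>?A. dist p a < d/3}"
    define V where "V = {p. \<exists>b\<in>?B. dist p b < d/3}"
    have ev1: "eventually (\<lambda>n. x n \<in> U \<union> V) sequentially"
    proof (rule ccontr)
      assume nev: "\<not> ?thesis"
      from not_eventually_sequentiallyD[OF nev] obtain r :: "nat \<Rightarrow> nat" where r: "strict_mono r" "\<forall>n. x (r n) \<notin> U \<union> V"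
        by (elim exE conjE)
      have "bounded (range (x \<circ> r))" using bd by (rule bounded_subset) auto
      then obtain l s where s: "strict_mono s" "((x \<circ> r) \<circ> s) \<longlonglongrightarrow> l"
        using bounded_imp_convergent_subsequence by blast
      have "l \<in> ?L" unfolding limit_points_def using s strict_mono_o[OF r(1) s(1)]
        by (auto simp: o_assoc)
      then have lAB: "l \<in> ?A \<or> l \<in> ?B" using sub by auto
      obtain M where M: "\<And>n. n \<ge> M \<Longrightarrow> dist (x (r (s n))) l < d/3"
        using tendstoD[OF s(2), of "d/3"] d by (auto simp: eventually_sequentially)
      have "x (r (s M)) \<in> U \<union> V" using lAB M[of M] unfolding U_def V_def by auto
      thus False using r(2) by simp
    qed
    have ev2: "eventually (\<lambda>n. dist (x (Suc n)) (x n) < d/3) sequentially" using dd[of "d/3"] d by simp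
    obtain N where N: "\<And>n. n \<ge> N \<Longrightarrow> x n \<in> U \<union> V" "\<And>n. n \<ge> N \<Longrightarrow> dist (x (Suc n)) (x n) < d/3"
      using eventually_conj[OF ev1 ev2] by (auto simp: eventually_sequentially)
    have gap: "dist p p' \<ge> d/3" if pUV: "p \<in> U" "p' \<in> V" for p p'
    proof -
      obtain a b where ab: "a \<in> ?A" "b \<in> ?B" "dist p a < d/3" "dist p' b < d/3"
        using pUV unfolding U_def V_def by auto
      have "d \<le> dist a b" using d(2) ab by blast
      also have "dist a b \<le> dist a p + dist p p' + dist p' b"
        using dist_triangle[of a b p] dist_triangle[of p b p'] by linarith
      finally show ?thesis using ab by (simp add: dist_commute)
    qed
    have stuck: "False" if all: "\<And>n. n \<ge> N \<Longrightarrow> x n \<in> W" and W: "W = U \<or> W = V"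
      and other: "b \<in> (if W = U then ?B else ?A)" for W b
    proof -
      from other have "b \<in> ?L" by (auto split: if_splits)
      then obtain r where r: "strict_mono r" "(x \<circ> r) \<longlonglongrightarrow> b" unfolding limit_points_def by auto
      obtain M where M: "\<And>n. n \<ge> M \<Longrightarrow> dist (x (r n)) b < d/3"
        using tendstoD[OF r(2), of "d/3"] d by (auto simp: eventually_sequentially)
      let ?n = "max M N"
      have "r ?n \<ge> N" using seq_suble[OF r(1), of ?n] by simp
      hence xin: "x (r ?n) \<in> W" using all by blast
      have db: "dist (x (r ?n)) b < d/3" using M by simp
      show False
      proof (cases "W = U")
        case True
        hence "b \<in> V" using other d(1) unfolding V_def by (auto intro!: bexI[of _ b])
        with xin True gap have "dist (x (r ?n)) b \<ge> d/3" by auto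
        thus False using db by simp
      next
        case False
        hence WV: "W = V" using W by simp
        hence "b \<in> U" using other d(1) False unfolding U_def by (auto intro!: bexI[of _ b])
        with xin WV gap have "dist b (x (r ?n)) \<ge> d/3" by auto
        thus False using db by (simp add: dist_commute)
      qed
    qed
    obtain bA where bA: "bA \<in> ?A" using ne1 by auto
    obtain bB where bB: "bB \<in> ?B" using ne2 by auto
    show False
    proof (cases "x N \<in> U")
      case True
      have "\<And>n. n \<ge> N \<Longrightarrow> x n \<in> U"
      proof (rule lp_stay[of N x U V])
        show "\<And>n. n \<ge> N \<Longrightarrow> x n \<in> U \<union> V" using N(1) .
        show "\<And>n. n \<ge> N \<Longrightarrow> x n \<in> U \<Longrightarrow> x (Suc n) \<notin> V"
          using gap N(2) by (metis dist_commute not_le)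
      qed (use True in auto)
      thus False using stuck[of U bB] bB by auto
    next
      case False
      hence XV: "x N \<in> V" using N(1) by blast
      have "\<And>n. n \<ge> N \<Longrightarrow> x n \<in> V"
      proof (rule lp_stay[of N x V U])
        show "\<And>n. n \<ge> N \<Longrightarrow> x n \<in> V \<union> U" using N(1) by blast
        show "\<And>n. n \<ge> N \<Longrightarrow> x n \<in> V \<Longrightarrow> x (Suc n) \<notin> U"
          using gap N(2) by (metis not_le)
      qed (use XV in auto)
      moreover have "U \<noteq> V"
      proof
        assume UV: "U = V"
        have "bA \<in> U" using bA d(1) unfolding U_def by (auto intro!: bexI[of _ bA])
        hence "dist bA bA \<ge> d/3" using gap UV by blast
        thus False using d(1) by simp
      qed
      ultimately show False using stuck[of V bA] bA by auto
    qed
  qed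
qed



lemma sum_upd:
  fixes f :: "'n::finite \<Rightarrow> real"
  shows "(\<Sum>j\<in>UNIV. if j = i then a else f j) = (\<Sum>j\<in>UNIV. f j) + (a - f i)"
proof -
  have "(\<Sum>j\<in>UNIV. if j = i then a else f j) = (\<Sum>j\<in>UNIV. f j + (if j = i then a - f i else 0))"
    by (rule sum.cong) auto
  also have "\<dots> = (\<Sum>j\<in>UNIV. f j) + (a - f i)" by (simp add: sum.distrib)
  finally show ?thesis .
qed

lemma Amul_update:
  fixes A :: "real^'n^'m"
  shows "A *v (\<chi> j. if j = i then v else x$j) = A *v x + (v - x$i) *\<^sub>R column i A"
proof -
  have "(\<Sum>j\<in>UNIV. A$k$j * (if j = i then v else x$j)) = (\<Sum>j\<in>UNIV. A$k$j * x$j) + (v - x$i) * A$k$i" for k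
  proof -
    have "(\<Sum>j\<in>UNIV. A$k$j * (if j = i then v else x$j)) = (\<Sum>j\<in>UNIV. if j = i then A$k$i * v else A$k$j * x$j)"
      by (rule sum.cong) auto
    also have "\<dots> = (\<Sum>j\<in>UNIV. A$k$j * x$j) + (A$k$i * v - A$k$i * x$i)" by (rule sum_upd)
    finally show ?thesis by (simp add: algebra_simps)
  qed
  thus ?thesis by (simp add: vec_eq_iff matrix_vector_mult_def column_def)
qed

lemma norm_upd:
  fixes x :: "real^'n"
  shows "(norm ((\<chi> j. if j = i then v else x$j) - x))^2 = (v - x$i)^2"
proof -
  have "(norm ((\<chi> j. if j = i then v else x$j) - x))^2 = (\<Sum>j\<in>UNIV. (if j = i then (v - x$i)^2 else 0))"
    unfolding power2_norm_eq_inner inner_vec_def by (rule sum.cong) (auto simp: power2_eq_square)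
  thus ?thesis by simp
qed

context
  fixes lam mu q :: real
  assumes lam: "lam > 0" and mu: "mu > 0" and q0: "0 < q" and q1: "q < 1"
begin

definition "Tobj (A :: real^'n^'m) y x = (norm (A *v x - y))^2/2 + lam * (\<Sum>j\<in>UNIV. \<bar>x$j\<bar> powr q)"

lemma step_dec:
  fixes A :: "real^'n^'m" and y :: "real^'m" and x :: "real^'n" and i :: 'n
  defines "x' \<equiv> (\<chi> j. if j = i then Tmap lam mu q (x$j - mu*(column j A \<bullet> (A *v x - y))) (x$j) else x$j)"
  shows "Tobj A y x' \<le> Tobj A y x - (1/mu - (norm (column i A))^2)/2 * (norm (x' - x))^2"
proof -
  define r where "r = A *v x - y"
  define c where "c = column i A"
  define g where "g = c \<bullet> r"
  define a where "a = x$i"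
  define z where "z = a - mu * g"
  define v where "v = Tmap lam mu q z a"
  define d where "d = v - a"
  have x'eq: "x' = (\<chi> j. if j = i then v else x$j)"
    unfolding x'_def v_def z_def g_def c_def r_def a_def by (simp add: vec_eq_iff)
  have nd: "(norm (x' - x))^2 = d^2" unfolding x'eq norm_upd d_def a_def ..
  have res: "A *v x' - y = r + d *\<^sub>R c" unfolding x'eq Amul_update r_def d_def a_def c_def by simp
  have nr: "(norm (A *v x' - y))^2 = (norm r)^2 + 2*d*g + d^2 * (norm c)^2"
    unfolding res power2_norm_eq_inner g_def
    by (simp add: inner_add_left inner_add_right inner_commute power2_eq_square algebra_simps)
  have pen: "(\<Sum>j\<in>UNIV. \<bar>x'$j\<bar> powr q) = (\<Sum>j\<in>UNIV. \<bar>x$j\<bar> powr q) + (\<bar>v\<bar> powr q - \<bar>a\<bar> powr q)"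
  proof -
    have "(\<Sum>j\<in>UNIV. \<bar>x'$j\<bar> powr q) = (\<Sum>j\<in>UNIV. if j = i then \<bar>v\<bar> powr q else \<bar>x$j\<bar> powr q)"
      unfolding x'eq by (rule sum.cong) auto
    thus ?thesis using sum_upd[of i "\<bar>v\<bar> powr q" "\<lambda>j. \<bar>x$j\<bar> powr q"] a_def by simp
  qed
  have "v \<in> prox_q lam mu q z" unfolding v_def by (rule Tmap_in_prox[OF lam mu q0 q1])
  hence "Hq lam mu q z v \<le> Hq lam mu q z a" using prox_iff[OF lam mu q0 q1] by blast
  hence P: "(z - v)^2/(2*mu) - (z - a)^2/(2*mu) \<le> lam * \<bar>a\<bar> powr q - lam * \<bar>v\<bar> powr q"
    unfolding Hq_def[OF lam mu q0 q1] by simp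
  have "(z - v)^2/(2*mu) - (z - a)^2/(2*mu) = d^2/(2*mu) + d*g"
    unfolding z_def d_def using mu by (simp add: field_simps power2_eq_square)
  with P have key: "d*g + lam * \<bar>v\<bar> powr q - lam * \<bar>a\<bar> powr q \<le> -(d^2/(2*mu))" by simp
  have "Tobj A y x' = (norm r)^2/2 + d*g + d^2 * (norm c)^2/2 + lam * (\<Sum>j\<in>UNIV. \<bar>x$j\<bar> powr q)
        + (lam * \<bar>v\<bar> powr q - lam * \<bar>a\<bar> powr q)"
    unfolding Tobj_def nr pen by (simp add: algebra_simps)
  also have "\<dots> \<le> (norm r)^2/2 + lam * (\<Sum>j\<in>UNIV. \<bar>x$j\<bar> powr q) - d^2/(2*mu) + d^2 * (norm c)^2/2"
    using key by simp
  also have "\<dots> = Tobj A y x - (1/mu - (norm c)^2)/2 * d^2"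
    unfolding Tobj_def r_def using mu by (simp add: field_simps)
  finally show ?thesis unfolding nd c_def .
qed

end

theorem theorem1:
  fixes A :: "real^'n^'m" and y :: "real^'m" and lam q mu :: real
    and idx :: "nat \<Rightarrow> 'n" and x :: "nat \<Rightarrow> real^'n"
  assumes "lam > 0" and "0 < q" and "q < 1"
    and "bij_betw idx {..<CARD('n)} UNIV"
    and "mu > 0"
    and "mu * (MAX i. (norm (column i A))^2) < 1"
    and "\<And>n. x (Suc n) = gaita_step lam mu q A y idx n (x n)"
  shows "(\<exists>r l. strict_mono r \<and> (x \<circ> r) \<longlonglongrightarrow> l)
         \<and> closed (limit_points x) \<and> connected (limit_points x)"
proof -
  note lam = assms(1) and q0 = assms(2) and q1 = assms(3) and mu = assms(5) and rec = assms(7)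
  define Lm where "Lm = (MAX i. (norm (column i A))^2)"
  have Lm: "(norm (column i A))^2 \<le> Lm" for i unfolding Lm_def by (rule Max_ge) auto
  define c where "c = (1/mu - Lm)/2"
  have "Lm < 1/mu" using assms(6) mu unfolding Lm_def by (simp add: field_simps)
  hence cpos: "c > 0" unfolding c_def by simp
  define T where "T n = (norm (A *v x n - y))^2/2 + lam * (\<Sum>j\<in>UNIV. \<bar>x n $ j\<bar> powr q)" for n
  have Tnn: "T n \<ge> 0" for n unfolding T_def using lam by (intro add_nonneg_nonneg mult_nonneg_nonneg sum_nonneg) auto
  have dec: "T (Suc n) \<le> T n - c * (norm (x (Suc n) - x n))^2" for n
  proof -
    let ?i = "idx (n mod CARD('n))"
    have xs: "x (Suc n) = (\<chi> j. if j = ?i then Tmap lam mu q (x n $ j - mu*(column j A \<bullet> (A *v x n - y))) (x n $ j) else x n $ j)"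
      unfolding rec gaita_step_def ..
    have "T (Suc n) \<le> T n - (1/mu - (norm (column ?i A))^2)/2 * (norm (x (Suc n) - x n))^2"
      using step_dec[OF lam mu q0 q1, where i="?i" and A=A and x="x n" and y=y] unfolding xs[symmetric] T_def by (simp add: Tobj_def[OF lam mu q0 q1])
    moreover have "c * (norm (x (Suc n) - x n))^2 \<le> (1/mu - (norm (column ?i A))^2)/2 * (norm (x (Suc n) - x n))^2"
      unfolding c_def using Lm[of ?i] by (intro mult_right_mono) auto
    ultimately show ?thesis by linarith
  qed
  have decs: "decseq T" using dec cpos by (intro decseq_SucI) (smt (verit) mult_nonneg_nonneg zero_le_power2)
  have TT0: "T n \<le> T 0" for n using decseqD[OF decs, of 0 n] by simp
  define B where "B = (T 0 / lam) powr (1/q)"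
  have coord: "\<bar>x n $ j\<bar> \<le> B" for n j
  proof -
    have "\<bar>x n $ j\<bar> powr q \<le> (\<Sum>j\<in>UNIV. \<bar>x n $ j\<bar> powr q)"
      by (rule member_le_sum) auto
    hence "lam * \<bar>x n $ j\<bar> powr q \<le> T n"
      unfolding T_def using lam by (smt (verit) mult_left_mono zero_le_power2 divide_nonneg_nonneg norm_ge_zero)
    hence "\<bar>x n $ j\<bar> powr q \<le> T 0 / lam" using TT0[of n] lam by (simp add: field_simps)
    hence "(\<bar>x n $ j\<bar> powr q) powr (1/q) \<le> (T 0 / lam) powr (1/q)"
      using q0 by (intro powr_mono2) auto
    thus ?thesis unfolding B_def powr_powr using q0 by simp
  qed
  have "norm (x n) \<le> real CARD('n) * B" for n
  proof -
    have "norm (x n) \<le> (\<Sum>j\<in>UNIV. \<bar>x n $ j\<bar>)" by (rule norm_le_l1_cart)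
    also have "\<dots> \<le> (\<Sum>j\<in>(UNIV::'n set). B)" by (rule sum_mono) (rule coord)
    finally show ?thesis by simp
  qed
  hence bd: "bounded (range x)" unfolding bounded_iff by auto
  have part1: "\<exists>r l. strict_mono r \<and> (x \<circ> r) \<longlonglongrightarrow> l"
    using bounded_imp_convergent_subsequence[OF bd] by blast
  obtain L where L: "T \<longlonglongrightarrow> L" using decseq_convergent[OF decs, of 0] Tnn by blast
  have dT: "(\<lambda>n. T n - T (Suc n)) \<longlonglongrightarrow> 0"
    using tendsto_diff[OF L LIMSEQ_Suc[OF L]] by simp
  have dd: "eventually (\<lambda>n. dist (x (Suc n)) (x n) < e) sequentially" if e: "e > 0" for e
  proof -
    have "eventually (\<lambda>n. \<bar>T n - T (Suc n) - 0\<bar> < c * e^2) sequentially"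
      using dT cpos e by (simp add: LIMSEQ_iff_nz tendsto_iff dist_real_def del: diff_0_right)
    thus ?thesis
    proof (rule eventually_mono)
      fix n assume "\<bar>T n - T (Suc n) - 0\<bar> < c * e^2"
      hence "c * (norm (x (Suc n) - x n))^2 < c * e^2" using dec[of n] by linarith
      hence "(norm (x (Suc n) - x n))^2 < e^2" using cpos by simp
      hence "norm (x (Suc n) - x n) < e" using e by (simp add: power_less_imp_less_base)
      thus "dist (x (Suc n)) (x n) < e" by (simp add: dist_norm)
    qed
  qed
  show ?thesis using part1 lp_closed lp_connected[OF bd dd] by blast
qed


end
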